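(* Let $D$ be a regular $(v,k,\lambda,\mu)$-PDS in a finite group $G$ with $0<\mu<k$ and $\sqrt\Delta\in\mathbb{Z}$, and let $\alpha\in\{1,2\}$. If some nonprincipal linear character of $G$ has order dividing $\pi_\alpha$, then every linear character of $G$ whose order is coprime to $\sqrt\Delta$ has order dividing $\pi_\alpha$.
   Context: A $(v,k,\lambda,\mu)$-PDS in a group $G$ of order $v$ is a $k$-subset $D$ such that every nonidentity element of $D$ is $xy^{-1}$ ($x,y\in D$) in exactly $\lambda$ ways and every nonidentity element of $G\setminus D$ in exactly $\mu$ ways; regular means $D=D^{(-1)}$ and $1\notin D$. $\Delta=(\lambda-\mu)^2+4(k-\mu)$, $\theta_{1,2}=\frac12(\lambda-\mu\pm\sqrt\Delta)$. Every prime $p$ dividing $v$ but not $\sqrt\Delta$ divides exactly one of $k-\theta_1$, $k-\theta_2$. For $i\in\{1,2\}$, $\Pi_i$ is the set of primes $p$ with $p\mid v$, $p\nmid\sqrt\Delta$ and $p\mid k-\theta_i$, and $\pi_i=\prod_{p\in\Pi_i}p^{e_p}$ where $p^{e_p}$ is the exact power of $p$ dividing $v$. $\chi(D)=\sum_{d\in D}\chi(d)$. *)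

theory Defs
  imports Complex_Main "HOL-Algebra.Group" "HOL-Computational_Algebra.Primes"
begin

definition is_PDS :: "('a,'b) monoid_scheme \<Rightarrow> 'a set \<Rightarrow> nat \<Rightarrow> nat \<Rightarrow> nat \<Rightarrow> nat \<Rightarrow> bool" where
  "is_PDS G D v k la mu \<longleftrightarrow>
     D \<subseteq> carrier G \<and> card (carrier G) = v \<and> card D = k \<and>
     (\<forall>g \<in> carrier G - {\<one>\<^bsub>G\<^esub>}.
        card {(x,y) \<in> D \<times> D. x \<otimes>\<^bsub>G\<^esub> inv\<^bsub>G\<^esub> y = g} = (if g \<in> D then la else mu))"

definition is_regular_PDS :: "('a,'b) monoid_scheme \<Rightarrow> 'a set \<Rightarrow> nat \<Rightarrow> nat \<Rightarrow> nat \<Rightarrow> nat \<Rightarrow> bool" where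
  "is_regular_PDS G D v k la mu \<longleftrightarrow>
     is_PDS G D v k la mu \<and> (\<lambda>x. inv\<^bsub>G\<^esub> x) ` D = D \<and> \<one>\<^bsub>G\<^esub> \<notin> D"

definition PDS_Delta :: "nat \<Rightarrow> nat \<Rightarrow> nat \<Rightarrow> int" where
  "PDS_Delta k la mu = (int la - int mu)^2 + 4 * (int k - int mu)"

text \<open>theta_1, theta_2, where s = sqrt Delta (an integer); the division by 2 is exact
  since s and la - mu have the same parity when s^2 = Delta.\<close>
definition PDS_theta :: "nat \<Rightarrow> nat \<Rightarrow> nat \<Rightarrow> nat \<Rightarrow> int" where
  "PDS_theta la mu s i =
     (if i = 1 then (int la - int mu + int s) div 2 else (int la - int mu - int s) div 2)"

definition PDS_Pi :: "nat \<Rightarrow> nat \<Rightarrow> nat \<Rightarrow> nat \<Rightarrow> nat \<Rightarrow> nat \<Rightarrow> nat set" where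
  "PDS_Pi v k la mu s i =
     {p. prime p \<and> p dvd v \<and> \<not> p dvd s \<and> int p dvd (int k - PDS_theta la mu s i)}"

definition PDS_pi :: "nat \<Rightarrow> nat \<Rightarrow> nat \<Rightarrow> nat \<Rightarrow> nat \<Rightarrow> nat \<Rightarrow> nat" where
  "PDS_pi v k la mu s i = (\<Prod>p \<in> PDS_Pi v k la mu s i. p ^ multiplicity p v)"

definition linear_char :: "('a,'b) monoid_scheme \<Rightarrow> ('a \<Rightarrow> complex) \<Rightarrow> bool" where
  "linear_char G \<chi> \<longleftrightarrow>
     (\<forall>x \<in> carrier G. \<chi> x \<noteq> 0) \<and>
     (\<forall>x \<in> carrier G. \<forall>y \<in> carrier G. \<chi> (x \<otimes>\<^bsub>G\<^esub> y) = \<chi> x * \<chi> y)"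

definition principal_char :: "('a,'b) monoid_scheme \<Rightarrow> ('a \<Rightarrow> complex) \<Rightarrow> bool" where
  "principal_char G \<chi> \<longleftrightarrow> (\<forall>x \<in> carrier G. \<chi> x = 1)"

definition char_order :: "('a,'b) monoid_scheme \<Rightarrow> ('a \<Rightarrow> complex) \<Rightarrow> nat" where
  "char_order G \<chi> = (LEAST n. 0 < n \<and> (\<forall>x \<in> carrier G. \<chi> x ^ n = 1))"

end

theory Submission
  imports Defs "Jordan_Normal_Form.Char_Poly" "HOL-Algebra.Multiplicative_Group"
begin

definition wv :: "nat \<Rightarrow> complex \<Rightarrow> complex vec" where
  "wv N w = vec N (\<lambda>i. w^i)"

lemma wv_carrier[simp]: "wv N w \<in> carrier_vec N" unfolding wv_def by simp

definition evS :: "nat \<Rightarrow> complex \<Rightarrow> complex set" where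
  "evS N w = {x. \<exists>B::int mat. B \<in> carrier_mat N N \<and>
      map_mat of_int B *\<^sub>v wv N w = x \<cdot>\<^sub>v wv N w}"

lemma evS_I: "B \<in> carrier_mat N N \<Longrightarrow> map_mat of_int B *\<^sub>v wv N w = x \<cdot>\<^sub>v wv N w \<Longrightarrow> x \<in> evS N w"
  unfolding evS_def by blast

lemma evS_E: "x \<in> evS N w \<Longrightarrow> (\<And>B. B \<in> carrier_mat N N \<Longrightarrow> map_mat of_int B *\<^sub>v wv N w = x \<cdot>\<^sub>v wv N w \<Longrightarrow> P) \<Longrightarrow> P"
  unfolding evS_def by blast

lemma mv_nth: assumes "B \<in> carrier_mat N N" "i < N"
  shows "(map_mat of_int B *\<^sub>v wv N w) $ i = (\<Sum>j<N. of_int (B$$(i,j)) * w^j)"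
  using assms unfolding wv_def by (simp add: mult_mat_vec_def scalar_prod_def atLeast0LessThan)

lemma evS_int: "of_int c \<in> evS N w"
proof -
  define B :: "int mat" where "B = mat N N (\<lambda>(i,j). if j = i then c else 0)"
  have Bc: "B \<in> carrier_mat N N" by (simp add: B_def)
  have "map_mat of_int B *\<^sub>v wv N w = of_int c \<cdot>\<^sub>v wv N w"
  proof (rule eq_vecI)
    fix i assume i: "i < dim_vec (of_int c \<cdot>\<^sub>v wv N w)"
    hence i: "i < N" by (simp add: wv_def)
    have "(map_mat of_int B *\<^sub>v wv N w) $ i = (\<Sum>j<N. of_int (B$$(i,j)) * w^j)"
      by (rule mv_nth[OF Bc i])
    also have "\<dots> = (\<Sum>j<N. if j = i then of_int c * w^j else 0)"
      by (intro sum.cong) (auto simp: B_def i)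
    also have "\<dots> = of_int c * w ^ i"
      using i by (simp add: sum.delta')
    finally show "(map_mat of_int B *\<^sub>v wv N w) $ i = (of_int c \<cdot>\<^sub>v wv N w) $ i"
      using i by (simp add: wv_def)
  qed (simp add: B_def wv_def)
  with Bc show ?thesis by (rule evS_I)
qed

lemma evS_add: assumes "x \<in> evS N w" "y \<in> evS N w" shows "x + y \<in> evS N w"
proof -
  obtain A where A: "A \<in> carrier_mat N N" "map_mat of_int A *\<^sub>v wv N w = x \<cdot>\<^sub>v wv N w"
    using assms(1) by (rule evS_E)
  obtain B where B: "B \<in> carrier_mat N N" "map_mat of_int B *\<^sub>v wv N w = y \<cdot>\<^sub>v wv N w"
    using assms(2) by (rule evS_E)
  have "map_mat of_int (A + B) = map_mat (of_int::int\<Rightarrow>complex) A + map_mat of_int B"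
    using A B by (intro eq_matI) auto
  hence "map_mat of_int (A + B) *\<^sub>v wv N w = map_mat of_int A *\<^sub>v wv N w + map_mat of_int B *\<^sub>v wv N w"
    using A B by (simp only: add_mult_distrib_mat_vec[of _ N N _ _ ] map_carrier_mat wv_carrier)
  also have "\<dots> = (x + y) \<cdot>\<^sub>v wv N w" unfolding A(2) B(2) by (rule add_smult_distrib_vec[symmetric])
  finally show ?thesis by (rule evS_I[rotated]) (use A B in simp)
qed

lemma evS_mult: assumes "x \<in> evS N w" "y \<in> evS N w" shows "x * y \<in> evS N w"
proof -
  obtain A where A: "A \<in> carrier_mat N N" "map_mat of_int A *\<^sub>v wv N w = x \<cdot>\<^sub>v wv N w"
    using assms(1) by (rule evS_E)
  obtain B where B: "B \<in> carrier_mat N N" "map_mat of_int B *\<^sub>v wv N w = y \<cdot>\<^sub>v wv N w"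
    using assms(2) by (rule evS_E)
  have Ac: "map_mat (of_int::int\<Rightarrow>complex) A \<in> carrier_mat N N" using A by simp
  have Bc: "map_mat (of_int::int\<Rightarrow>complex) B \<in> carrier_mat N N" using B by simp
  have "map_mat of_int (A * B) = map_mat (of_int::int\<Rightarrow>complex) A * map_mat of_int B"
    by (rule of_int_hom.mat_hom_mult[OF A(1) B(1)])
  hence "map_mat of_int (A * B) *\<^sub>v wv N w = map_mat of_int A *\<^sub>v (map_mat of_int B *\<^sub>v wv N w)"
    by (simp only: assoc_mult_mat_vec[OF Ac Bc wv_carrier])
  also have "\<dots> = y \<cdot>\<^sub>v (map_mat of_int A *\<^sub>v wv N w)" unfolding B(2)
    by (rule mult_mat_vec[OF Ac wv_carrier])
  also have "\<dots> = (x * y) \<cdot>\<^sub>v wv N w" unfolding A(2) by (simp only: smult_smult_assoc mult.commute)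
  finally show ?thesis by (rule evS_I[rotated]) (use A B in simp)
qed

lemma evS_w: assumes "N > 0" "w ^ N = 1" shows "w \<in> evS N w"
proof -
  define B :: "int mat" where "B = mat N N (\<lambda>(i,j). if j = Suc i mod N then 1 else 0)"
  have Bc: "B \<in> carrier_mat N N" by (simp add: B_def)
  have "map_mat of_int B *\<^sub>v wv N w = w \<cdot>\<^sub>v wv N w"
  proof (rule eq_vecI)
    fix i assume i: "i < dim_vec (w \<cdot>\<^sub>v wv N w)"
    hence i: "i < N" by (simp add: wv_def)
    have "(map_mat of_int B *\<^sub>v wv N w) $ i = (\<Sum>j<N. of_int (if j = Suc i mod N then 1 else 0) * w^j)"
      using i unfolding B_def wv_def by (simp add: mult_mat_vec_def scalar_prod_def atLeast0LessThan)
    also have "\<dots> = (\<Sum>j<N. if j = Suc i mod N then w^j else 0)"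
      by (intro sum.cong) auto
    also have "\<dots> = w ^ (Suc i mod N)"
      using assms(1) by (simp add: sum.delta')
    also have "\<dots> = w ^ Suc i"
    proof -
      have "w ^ Suc i = w ^ (N * (Suc i div N) + Suc i mod N)"
        by (simp only: mult_div_mod_eq)
      also have "\<dots> = (w^N)^(Suc i div N) * w^(Suc i mod N)"
        by (simp only: power_add power_mult)
      finally have "w ^ Suc i = (w^N)^(Suc i div N) * w^(Suc i mod N)" .
      thus ?thesis using assms(2) by simp
    qed
    finally show "(map_mat of_int B *\<^sub>v wv N w) $ i = (w \<cdot>\<^sub>v wv N w) $ i"
      using i by (simp add: wv_def)
  qed (simp add: B_def wv_def)
  with Bc show ?thesis by (rule evS_I)
qed

lemma evS_alg_int: assumes "N > 0" "x \<in> evS N w" shows "algebraic_int x"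
proof -
  obtain A where A: "A \<in> carrier_mat N N" "map_mat of_int A *\<^sub>v wv N w = x \<cdot>\<^sub>v wv N w"
    using assms(2) by (rule evS_E)
  let ?A = "map_mat (of_int :: int \<Rightarrow> complex) A"
  have Ac: "?A \<in> carrier_mat N N" using A by simp
  have nz: "wv N w \<noteq> 0\<^sub>v N"
  proof
    assume "wv N w = 0\<^sub>v N"
    hence "wv N w $ 0 = 0\<^sub>v N $ 0" by simp
    thus False using assms(1) by (simp add: wv_def)
  qed
  have dr: "dim_row ?A = N" using Ac by simp
  have "eigenvector ?A (wv N w) x"
    unfolding eigenvector_def dr using A(2) nz by simp
  hence "eigenvalue ?A x" unfolding eigenvalue_def by blast
  hence "poly (char_poly ?A) x = 0" using eigenvalue_root_char_poly[OF Ac] by simp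
  moreover have "char_poly ?A = map_poly of_int (char_poly A)"
    by (rule of_int_hom.char_poly_hom[OF A(1)])
  ultimately have "poly (map_poly of_int (char_poly A)) x = 0" by metis
  moreover have "lead_coeff (char_poly A) = 1" using degree_monic_char_poly[OF A(1)] by simp
  ultimately show ?thesis by (subst algebraic_int_altdef_ipoly) (rule exI[of _ "char_poly A"], rule conjI)
qed

lemma evS_minus: "x \<in> evS N w \<Longrightarrow> - x \<in> evS N w"
  using evS_mult[OF evS_int[of "-1"]] by simp

lemma evS_diff: "x \<in> evS N w \<Longrightarrow> y \<in> evS N w \<Longrightarrow> x - y \<in> evS N w"
  using evS_add[OF _ evS_minus[of y]] by simp

lemma evS_pow: "x \<in> evS N w \<Longrightarrow> x ^ n \<in> evS N w"
  by (induction n) (auto intro: evS_mult simp: evS_int[of 1, simplified])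

lemma evS_one: "1 \<in> evS N w" using evS_int[of 1] by simp
lemma evS_zero: "0 \<in> evS N w" using evS_int[of 0] by simp

lemma evS_sum: "(\<And>i. i \<in> A \<Longrightarrow> f i \<in> evS N w) \<Longrightarrow> sum f A \<in> evS N w"
  by (induction A rule: infinite_finite_induct) (auto intro: evS_add simp: evS_zero)

lemma evS_of_nat: "of_nat n \<in> evS N w" using evS_int[of "int n"] by simp

lemma sum_split3: assumes "1 < (r::nat)" shows "(\<Sum>i\<le>r. F i) = F 0 + F r + (\<Sum>i\<in>{1..<r}. F i)"
proof -
  have "{..r} = insert 0 (insert r {1..<r})" using assms by auto
  moreover have "0 \<notin> insert r {1..<r}" using assms by auto
  moreover have "r \<notin> {1..<r}" by auto
  ultimately show ?thesis by (simp add: add.assoc)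
qed

lemma frob2:
  assumes r: "prime r" and x: "x \<in> evS N w" and y: "y \<in> evS N w"
  shows "\<exists>z \<in> evS N w. (x + y) ^ r = x ^ r + y ^ r + of_nat r * z"
proof -
  have r1: "r > 1" using r prime_gt_1_nat by blast
  have "(x + y) ^ r = (\<Sum>i\<le>r. of_nat (r choose i) * x ^ i * y ^ (r - i))"
    by (rule binomial_ring)
  also have "\<dots> = y ^ r + x ^ r + (\<Sum>i\<in>{1..<r}. of_nat (r choose i) * x ^ i * y ^ (r - i))"
  proof -
    have a: "of_nat (r choose 0) * x ^ 0 * y ^ (r - 0) = y ^ r" by simp
    have b: "of_nat (r choose r) * x ^ r * y ^ (r - r) = x ^ r" by simp
    show ?thesis
      by (subst sum_split3[OF r1]) (simp only: a b)
  qed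
  finally have e1: "(x + y) ^ r = y ^ r + x ^ r + (\<Sum>i\<in>{1..<r}. of_nat (r choose i) * x ^ i * y ^ (r - i))" .
  have e2: "(\<Sum>i\<in>{1..<r}. of_nat (r choose i) * x ^ i * y ^ (r - i))
     = of_nat r * (\<Sum>i\<in>{1..<r}. of_nat ((r choose i) div r) * x ^ i * y ^ (r - i))"
  proof -
    have "\<And>i. i \<in> {1..<r} \<Longrightarrow> (r choose i) = r * ((r choose i) div r)"
    proof -
      fix i assume i: "i \<in> {1..<r}"
      have "r dvd (r choose i)" using i r r1 by (intro dvd_choose_prime) auto
      thus "(r choose i) = r * ((r choose i) div r)" by simp
    qed
    hence "\<And>i. i \<in> {1..<r} \<Longrightarrow> of_nat (r choose i) * x ^ i * y ^ (r - i)
       = of_nat r * (of_nat ((r choose i) div r) * x ^ i * y ^ (r - i))"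
      by (metis mult.assoc of_nat_mult)
    thus ?thesis unfolding sum_distrib_left by (rule sum.cong[OF refl])
  qed
  have "(x + y) ^ r = x ^ r + y ^ r +
      of_nat r * (\<Sum>i\<in>{1..<r}. of_nat ((r choose i) div r) * x ^ i * y ^ (r - i))"
    unfolding e1 e2 by (simp only: add.commute)
  moreover have "(\<Sum>i\<in>{1..<r}. of_nat ((r choose i) div r) * x ^ i * y ^ (r - i)) \<in> evS N w"
    by (intro evS_sum evS_mult evS_pow evS_of_nat x y)
  ultimately show ?thesis by blast
qed

lemma frob_sum:
  assumes r: "prime r" and fin: "finite A" and f: "\<And>i. i \<in> A \<Longrightarrow> f i \<in> evS N w"
  shows "\<exists>z \<in> evS N w. (sum f A) ^ r = (\<Sum>i\<in>A. f i ^ r) + of_nat r * z"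
  using fin f
proof (induction A rule: finite_induct)
  case empty
  have "(0::complex) ^ r = 0" using r prime_gt_0_nat by (simp add: power_0_left)
  hence "(sum f {}) ^ r = (\<Sum>i\<in>{}. f i ^ r) + of_nat r * 0" by simp
  thus ?case using evS_zero[of N w] by blast
next
  case (insert a A)
  obtain z where z: "z \<in> evS N w" "(sum f A) ^ r = (\<Sum>i\<in>A. f i ^ r) + of_nat r * z"
    using insert by auto
  have fa: "f a \<in> evS N w" using insert by auto
  have sA: "sum f A \<in> evS N w" using insert by (auto intro: evS_sum)
  obtain z2 where z2: "z2 \<in> evS N w" "(f a + sum f A) ^ r = f a ^ r + (sum f A) ^ r + of_nat r * z2"
    using frob2[OF r fa sA] by auto
  have "(sum f (insert a A)) ^ r = (\<Sum>i\<in>insert a A. f i ^ r) + of_nat r * (z + z2)"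
    using insert z z2 by (simp add: algebra_simps)
  moreover have "z + z2 \<in> evS N w" by (rule evS_add[OF z(1) z2(1)])
  ultimately show ?case by blast
qed

lemma evS_dvd:
  assumes N: "N > 0" and r: "prime r" and z: "z \<in> evS N w" and eq: "of_int n = of_nat r * z"
  shows "int r dvd n"
proof -
  have r0: "r \<noteq> 0" using r by auto
  have "z = of_int n / of_nat r" using eq r0 by (simp add: field_simps)
  hence "z \<in> \<rat>" by simp
  moreover have "algebraic_int z" by (rule evS_alg_int[OF N z])
  ultimately have "z \<in> \<int>" by (rule rational_algebraic_int_is_int[rotated])
  then obtain m where "z = of_int m" by (auto elim: Ints_cases)
  hence "of_int n = (of_int (int r * m) :: complex)" using eq by simp
  hence "n = int r * m" by (simp only: of_int_eq_iff)
  thus ?thesis by simp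
qed

lemma fermat_int:
  assumes r: "prime r"
  shows "int r dvd a ^ r - a"
proof -
  have key: "int r dvd int b ^ r - int b" for b :: nat
  proof -
    obtain z where z: "z \<in> evS 1 1" "(\<Sum>i<b. (1::complex)) ^ r = (\<Sum>i<b. 1 ^ r) + of_nat r * z"
      using frob_sum[OF r, of "{..<b}" "\<lambda>_. 1" 1 1] evS_one by auto
    hence eq: "of_int (int b ^ r - int b) = of_nat r * z" by simp
    have "(1::nat) > 0" by simp
    from evS_dvd[OF this r z(1) eq] show ?thesis .
  qed
  define b where "b = nat (a mod int r)"
  have rpos: "int r > 0" using r prime_gt_0_nat by simp
  have b: "int b = a mod int r" unfolding b_def using rpos by simp
  have "a ^ r mod int r = (a mod int r) ^ r mod int r" by (simp add: power_mod)
  also have "\<dots> = int b ^ r mod int r" using b by simp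
  also have "\<dots> = int b mod int r" using key[of b] by (simp add: mod_eq_dvd_iff)
  also have "\<dots> = a mod int r" using b by simp
  finally show ?thesis by (simp add: mod_eq_dvd_iff)
qed

lemma frob_main:
  assumes N: "N > 0" and r: "prime r" and fin: "finite A"
    and f: "\<And>i. i \<in> A \<Longrightarrow> f i \<in> evS N w" and g: "\<And>i. i \<in> A \<Longrightarrow> g i \<in> evS N w"
    and fg: "\<And>i. i \<in> A \<Longrightarrow> f i ^ r = g i ^ r"
    and sa: "sum f A = of_int a" and sb: "sum g A = of_int b"
  shows "int r dvd a - b"
proof -
  obtain z1 where z1: "z1 \<in> evS N w" "(sum f A) ^ r = (\<Sum>i\<in>A. f i ^ r) + of_nat r * z1"
    using frob_sum[of r A f N w] r fin f by blast
  obtain z2 where z2: "z2 \<in> evS N w" "(sum g A) ^ r = (\<Sum>i\<in>A. g i ^ r) + of_nat r * z2"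
    using frob_sum[of r A g N w] r fin g by blast
  have "(\<Sum>i\<in>A. f i ^ r) = (\<Sum>i\<in>A. g i ^ r)" using fg by (rule sum.cong[OF refl])
  hence "of_int (a ^ r - b ^ r) = of_nat r * (z1 - z2)"
    using z1(2) z2(2) sa sb by (simp add: algebra_simps)
  hence d: "int r dvd a ^ r - b ^ r" by (rule evS_dvd[OF N r evS_diff[OF z1(1) z2(1)]])
  have "a - b = (a ^ r - b ^ r) - (a ^ r - a) + (b ^ r - b)" by simp
  thus ?thesis using d fermat_int[OF r, of a] fermat_int[OF r, of b]
    by (metis dvd_add dvd_diff)
qed

lemma evS_root: assumes N: "N > 0" and z: "z ^ N = 1" shows "z \<in> evS N (cis (2*pi/N))"
proof -
  have "z \<in> (\<lambda>k. cis (2 * pi * real k / real N)) ` {..<N}"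
    using bij_betw_roots_unity[OF N] z unfolding bij_betw_def by auto
  then obtain j where j: "z = cis (2 * pi * real j / real N)" by auto
  have "z = cis (2*pi/N) ^ j" unfolding j DeMoivre by (simp add: field_simps)
  moreover have "cis (2*pi/N) ^ N = 1" unfolding DeMoivre using N by simp
  ultimately show ?thesis using evS_pow evS_w[OF N] by metis
qed

context group
begin

lemma lc_one: assumes "linear_char G \<chi>" shows "\<chi> \<one> = 1"
proof -
  have "\<chi> \<one> = \<chi> \<one> * \<chi> \<one>" using assms unfolding linear_char_def
    by (metis one_closed l_one)
  moreover have "\<chi> \<one> \<noteq> 0" using assms unfolding linear_char_def by simp
  ultimately show ?thesis by (metis mult_cancel_left2)
qed

lemma lc_mult: "linear_char G \<chi> \<Longrightarrow> x \<in> carrier G \<Longrightarrow> y \<in> carrier G \<Longrightarrow> \<chi> (x \<otimes> y) = \<chi> x * \<chi> y"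
  unfolding linear_char_def by simp

lemma lc_nz: "linear_char G \<chi> \<Longrightarrow> x \<in> carrier G \<Longrightarrow> \<chi> x \<noteq> 0"
  unfolding linear_char_def by simp

lemma lc_pow: assumes "linear_char G \<chi>" "x \<in> carrier G" shows "\<chi> (x [^] (n::nat)) = \<chi> x ^ n"
  by (induction n) (simp_all add: lc_one[OF assms(1)] lc_mult[OF assms(1)] assms(2) mult.commute)

lemma lc_inv: assumes "linear_char G \<chi>" "x \<in> carrier G" shows "\<chi> (inv x) * \<chi> x = 1"
  using lc_mult[OF assms(1) inv_closed[OF assms(2)] assms(2)] lc_one[OF assms(1)] assms(2) by simp

lemma lc_root: assumes "finite (carrier G)" "linear_char G \<chi>" "x \<in> carrier G"
  shows "\<chi> x ^ order G = 1"
  using lc_pow[OF assms(2,3), of "order G"] pow_order_eq_1[OF assms(3)] lc_one[OF assms(2)] by simp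

lemma lc_prod: "linear_char G \<chi> \<Longrightarrow> linear_char G \<psi> \<Longrightarrow> linear_char G (\<lambda>x. \<chi> x * \<psi> x)"
  unfolding linear_char_def by (simp add: algebra_simps)

lemma lc_power: "linear_char G \<chi> \<Longrightarrow> linear_char G (\<lambda>x. \<chi> x ^ n)"
  unfolding linear_char_def by (simp add: power_mult_distrib)

lemma co_props: assumes fin: "finite (carrier G)" and lc: "linear_char G \<chi>"
  shows "char_order G \<chi> > 0" "\<And>x. x \<in> carrier G \<Longrightarrow> \<chi> x ^ char_order G \<chi> = 1"
proof -
  have ex: "0 < order G \<and> (\<forall>x \<in> carrier G. \<chi> x ^ order G = 1)"
    using lc_root[OF fin lc] order_gt_0_iff_finite fin by auto
  have "0 < char_order G \<chi> \<and> (\<forall>x \<in> carrier G. \<chi> x ^ char_order G \<chi> = 1)"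
    unfolding char_order_def by (rule LeastI[of _ "order G"], rule ex)
  thus "char_order G \<chi> > 0" "\<And>x. x \<in> carrier G \<Longrightarrow> \<chi> x ^ char_order G \<chi> = 1" by auto
qed

lemma co_dvd: assumes fin: "finite (carrier G)" and lc: "linear_char G \<chi>"
  and m: "\<forall>x \<in> carrier G. \<chi> x ^ m = 1"
  shows "char_order G \<chi> dvd m"
proof (rule ccontr)
  let ?o = "char_order G \<chi>"
  assume nd: "\<not> ?o dvd m"
  have o0: "?o > 0" by (rule co_props(1)[OF fin lc])
  have r0: "m mod ?o > 0" using nd by (simp add: dvd_eq_mod_eq_0)
  have "\<forall>x \<in> carrier G. \<chi> x ^ (m mod ?o) = 1"
  proof
    fix x assume x: "x \<in> carrier G"
    have "\<chi> x ^ m = (\<chi> x ^ ?o) ^ (m div ?o) * \<chi> x ^ (m mod ?o)"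
      by (metis div_mult_mod_eq power_add power_mult mult.commute)
    thus "\<chi> x ^ (m mod ?o) = 1" using m x co_props(2)[OF fin lc x] by simp
  qed
  hence "?o \<le> m mod ?o" using r0 unfolding char_order_def by (intro Least_le) simp
  moreover have "m mod ?o < ?o" using o0 by simp
  ultimately show False by simp
qed

lemma co_pow: assumes fin: "finite (carrier G)" and lc: "linear_char G \<chi>"
  and d: "char_order G \<chi> dvd m" and x: "x \<in> carrier G"
  shows "\<chi> x ^ m = 1"
proof -
  obtain q where "m = char_order G \<chi> * q" using d by auto
  thus ?thesis using co_props(2)[OF fin lc x] by (simp add: power_mult)
qed

lemma co_one: assumes fin: "finite (carrier G)" and lc: "linear_char G \<chi>"
  and "char_order G \<chi> = 1" shows "principal_char G \<chi>"
  using co_props(2)[OF fin lc] assms(3) unfolding principal_char_def by simp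

lemma lc_sum_zero: assumes fin: "finite (carrier G)" and lc: "linear_char G \<chi>"
  and np: "\<not> principal_char G \<chi>"
  shows "(\<Sum>x\<in>carrier G. \<chi> x) = 0"
proof -
  obtain g where g: "g \<in> carrier G" "\<chi> g \<noteq> 1" using np unfolding principal_char_def by auto
  have "(\<Sum>x\<in>carrier G. \<chi> x) = (\<Sum>x\<in>carrier G. \<chi> (g \<otimes> x))"
    by (rule sum.reindex_bij_witness[where j = "\<lambda>x. inv g \<otimes> x" and i = "\<lambda>x. g \<otimes> x"])
       (auto simp: g m_assoc[symmetric])
  also have "\<dots> = \<chi> g * (\<Sum>x\<in>carrier G. \<chi> x)"
    by (simp add: sum_distrib_left lc_mult[OF lc] g)
  finally have "(\<chi> g - 1) * (\<Sum>x\<in>carrier G. \<chi> x) = 0" by (simp add: algebra_simps)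
  thus ?thesis using g by simp
qed

end

lemma theta_facts:
  assumes s: "int s ^ 2 = PDS_Delta k la mu"
  shows "PDS_theta la mu s 1 - PDS_theta la mu s 2 = int s"
    and "PDS_theta la mu s 1 + PDS_theta la mu s 2 = int la - int mu"
    and "PDS_theta la mu s 1 * PDS_theta la mu s 2 = - (int k - int mu)"
proof -
  define L where "L = int la - int mu"
  define K where "K = int k - int mu"
  have sL: "int s ^ 2 = L ^ 2 + 4 * K" using s unfolding PDS_Delta_def L_def K_def by simp
  have "even (int s ^ 2) = even (L ^ 2)" using sL by simp
  hence "even (int s) = even L" by simp
  hence ev1: "even (L + int s)" and ev2: "even (L - int s)" by auto
  have t1: "2 * PDS_theta la mu s 1 = L + int s" unfolding PDS_theta_def L_def[symmetric]
    using ev1 by simp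
  have t2: "2 * PDS_theta la mu s 2 = L - int s" unfolding PDS_theta_def L_def[symmetric]
    using ev2 by simp
  show "PDS_theta la mu s 1 - PDS_theta la mu s 2 = int s" using t1 t2 by linarith
  show "PDS_theta la mu s 1 + PDS_theta la mu s 2 = int la - int mu" using t1 t2 L_def by linarith
  have "4 * (PDS_theta la mu s 1 * PDS_theta la mu s 2) = (L + int s) * (L - int s)"
    using t1 t2 by (metis mult.assoc mult.left_commute numeral_Bit0 numeral_One mult_2 one_add_one)
  also have "\<dots> = - 4 * K" using sL by (simp add: algebra_simps power2_eq_square)
  finally show "PDS_theta la mu s 1 * PDS_theta la mu s 2 = - (int k - int mu)"
    unfolding K_def by simp
qed

lemma theta_roots:
  assumes s: "int s ^ 2 = PDS_Delta k la mu"
    and c: "(c::complex) ^ 2 = (of_nat la - of_nat mu) * c + (of_nat k - of_nat mu)"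
  shows "c = of_int (PDS_theta la mu s 1) \<or> c = of_int (PDS_theta la mu s 2)"
proof -
  let ?a = "PDS_theta la mu s 1" and ?b = "PDS_theta la mu s 2"
  have sum: "of_int ?a + of_int ?b = (of_nat la - of_nat mu :: complex)"
    using theta_facts(2)[OF s] by (metis of_int_add of_int_diff of_int_of_nat_eq)
  have prod: "of_int ?a * of_int ?b = - (of_nat k - of_nat mu :: complex)"
    using theta_facts(3)[OF s] by (metis of_int_minus of_int_mult of_int_diff of_int_of_nat_eq)
  have "(c - of_int ?a) * (c - of_int ?b) = c^2 - (of_int ?a + of_int ?b) * c + of_int ?a * of_int ?b"
    by (simp add: algebra_simps power2_eq_square)
  also have "\<dots> = 0" unfolding sum prod c by simp
  finally show ?thesis by simp
qed

lemma theta_eq: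
  assumes s: "int s ^ 2 = PDS_Delta k la mu" and r: "\<not> int r dvd int s"
    and x: "x \<in> {PDS_theta la mu s 1, PDS_theta la mu s 2}"
    and y: "y \<in> {PDS_theta la mu s 1, PDS_theta la mu s 2}"
    and d: "int r dvd x - y"
  shows "x = y"
proof (rule ccontr)
  assume "x \<noteq> y"
  hence "x - y = int s \<or> x - y = - int s" using x y theta_facts(1)[OF s] by auto
  thus False using d r by auto
qed

context group
begin

lemma sum_inv_D: assumes Dc: "D \<subseteq> carrier G" and inv: "(\<lambda>x. inv x) ` D = D"
  shows "(\<Sum>y\<in>D. f y) = (\<Sum>y\<in>D. f (inv y))"
proof (rule sum.reindex_bij_witness[where i = "\<lambda>x. inv x" and j = "\<lambda>x. inv x"])
  fix a assume a: "a \<in> D"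
  show "inv (inv a) = a" using a Dc by auto
  show "inv a \<in> D" using a inv by auto
  show "f (inv (inv a)) = f a" using a Dc by auto
qed (use Dc inv in auto)

lemma pds_quad:
  assumes fin: "finite (carrier G)" and reg: "is_regular_PDS G D v k la mu"
    and lc: "linear_char G \<chi>" and np: "\<not> principal_char G \<chi>"
  shows "(\<Sum>d\<in>D. \<chi> d) ^ 2 = (of_nat la - of_nat mu) * (\<Sum>d\<in>D. \<chi> d) + (of_nat k - of_nat mu)"
proof -
  have Dc: "D \<subseteq> carrier G" and cardD: "card D = k"
    and cnt: "\<And>g. g \<in> carrier G - {\<one>} \<Longrightarrow>
        card {(x,y) \<in> D \<times> D. x \<otimes> inv y = g} = (if g \<in> D then la else mu)"
    and invD: "(\<lambda>x. inv x) ` D = D" and oneD: "\<one> \<notin> D"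
    using reg unfolding is_regular_PDS_def is_PDS_def by auto
  have finD: "finite D" using Dc fin finite_subset by blast
  let ?c = "\<Sum>d\<in>D. \<chi> d"
  let ?f = "\<lambda>p. fst p \<otimes> inv (snd p)"
  let ?N = "\<lambda>t. card {p \<in> D \<times> D. ?f p = t}"
  have "?c ^ 2 = ?c * (\<Sum>y\<in>D. \<chi> (inv y))"
    using sum_inv_D[OF Dc invD, of \<chi>] by (simp add: power2_eq_square)
  also have "\<dots> = (\<Sum>x\<in>D. \<Sum>y\<in>D. \<chi> x * \<chi> (inv y))"
    by (rule sum_product)
  also have "\<dots> = (\<Sum>x\<in>D. \<Sum>y\<in>D. \<chi> (x \<otimes> inv y))"
    using Dc by (intro sum.cong refl) (auto simp: lc_mult[OF lc] subsetD)
  also have "\<dots> = (\<Sum>p\<in>D \<times> D. \<chi> (?f p))"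
    by (simp add: sum.cartesian_product case_prod_beta')
  also have "\<dots> = (\<Sum>t\<in>carrier G. \<Sum>p\<in>{p \<in> D \<times> D. ?f p = t}. \<chi> (?f p))"
    by (rule sum.group[symmetric]) (use finD fin Dc in \<open>auto intro!: m_closed inv_closed simp: subsetD\<close>)
  also have "\<dots> = (\<Sum>t\<in>carrier G. of_nat (?N t) * \<chi> t)"
    by (intro sum.cong refl) simp
  also have "\<dots> = of_nat (?N \<one>) * \<chi> \<one> + (\<Sum>t\<in>carrier G - {\<one>}. of_nat (?N t) * \<chi> t)"
    by (rule sum.remove[OF fin one_closed])
  also have "?N \<one> = k"
  proof -
    have "{p \<in> D \<times> D. ?f p = \<one>} = (\<lambda>x. (x,x)) ` D"
    proof (intro Set.set_eqI iffI)
      fix p assume p: "p \<in> {p \<in> D \<times> D. ?f p = \<one>}"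
      then obtain x y where xy: "p = (x,y)" "x \<in> D" "y \<in> D" "x \<otimes> inv y = \<one>" by auto
      have "x = y" using xy Dc by (metis inv_equality inv_inv subsetD inv_closed)
      thus "p \<in> (\<lambda>x. (x,x)) ` D" using xy by auto
    next
      fix p assume "p \<in> (\<lambda>x. (x,x)) ` D"
      thus "p \<in> {p \<in> D \<times> D. ?f p = \<one>}" using Dc by (auto simp: r_inv)
    qed
    moreover have "card ((\<lambda>x. (x,x)) ` D) = card D" by (rule card_image) (auto simp: inj_on_def)
    ultimately show ?thesis using cardD by simp
  qed
  also have "(\<Sum>t\<in>carrier G - {\<one>}. of_nat (?N t) * \<chi> t)
      = (\<Sum>t\<in>carrier G - {\<one>}. of_nat mu * \<chi> t + (if t \<in> D then (of_nat la - of_nat mu) * \<chi> t else 0))"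
  proof (intro sum.cong refl)
    fix t assume t: "t \<in> carrier G - {\<one>}"
    have "?N t = card {(x,y) \<in> D \<times> D. x \<otimes> inv y = t}"
      by (rule arg_cong[where f = card]) auto
    also have "\<dots> = (if t \<in> D then la else mu)" by (rule cnt[OF t])
    finally show "of_nat (?N t) * \<chi> t = of_nat mu * \<chi> t + (if t \<in> D then (of_nat la - of_nat mu) * \<chi> t else 0)"
      by (simp add: algebra_simps)
  qed
  also have "\<dots> = of_nat mu * (\<Sum>t\<in>carrier G - {\<one>}. \<chi> t) + (of_nat la - of_nat mu) * ?c"
  proof -
    have "(\<Sum>t\<in>carrier G - {\<one>}. (if t \<in> D then (of_nat la - of_nat mu) * \<chi> t else 0))
        = (\<Sum>t\<in>(carrier G - {\<one>}) \<inter> D. (of_nat la - of_nat mu) * \<chi> t)"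
      using fin by (simp add: sum.inter_restrict)
    also have "(carrier G - {\<one>}) \<inter> D = D" using Dc oneD by auto
    finally show ?thesis by (simp add: sum.distrib sum_distrib_left)
  qed
  also have "(\<Sum>t\<in>carrier G - {\<one>}. \<chi> t) = - 1"
    using lc_sum_zero[OF fin lc np] sum.remove[OF fin one_closed, of \<chi>] lc_one[OF lc]
    by (simp add: eq_neg_iff_add_eq_0 add.commute)
  finally show ?thesis using lc_one[OF lc] by (simp add: algebra_simps)
qed

end

lemma root_coprime:
  assumes "(z::complex) ^ p = 1" "z ^ q = 1" "coprime p q" "p \<noteq> 0"
  shows "z = 1"
proof -
  obtain x y where xy: "p * x = q * y + gcd p q" using bezout_nat[OF assms(4)] by blast
  hence xy: "p * x = q * y + 1" using assms(3) by simp
  have "1 = z ^ (p * x)" using assms(1) by (simp add: power_mult)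
  also have "\<dots> = (z ^ q) ^ y * z" unfolding xy by (simp add: power_add power_mult)
  also have "\<dots> = z" using assms(2) by simp
  finally show ?thesis by simp
qed

context group
begin

lemma lc_evS: assumes fin: "finite (carrier G)" and lc: "linear_char G \<chi>" and x: "x \<in> carrier G"
  shows "\<chi> x \<in> evS (order G) (cis (2*pi/order G))"
  by (rule evS_root) (use lc_root[OF fin lc x] order_gt_0_iff_finite fin in auto)

lemma lc_val:
  assumes fin: "finite (carrier G)" and reg: "is_regular_PDS G D v k la mu"
    and lc: "linear_char G \<chi>" and np: "\<not> principal_char G \<chi>"
    and s: "int s ^ 2 = PDS_Delta k la mu"
  shows "\<exists>t \<in> {PDS_theta la mu s 1, PDS_theta la mu s 2}. (\<Sum>d\<in>D. \<chi> d) = of_int t"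
  using theta_roots[OF s pds_quad[OF fin reg lc np]] by auto

lemma sub_char_np:
  assumes fin: "finite (carrier G)" and lc: "linear_char G \<chi>"
    and p: "prime p" and d: "p dvd char_order G \<chi>"
  shows "\<not> principal_char G (\<lambda>x. \<chi> x ^ (char_order G \<chi> div p))"
    and "\<And>x. x \<in> carrier G \<Longrightarrow> (\<chi> x ^ (char_order G \<chi> div p)) ^ p = 1"
proof -
  let ?o = "char_order G \<chi>"
  have o0: "?o > 0" by (rule co_props(1)[OF fin lc])
  have p1: "p > 1" using p prime_gt_1_nat by blast
  have eq: "?o div p * p = ?o" using d by simp
  show "\<And>x. x \<in> carrier G \<Longrightarrow> (\<chi> x ^ (?o div p)) ^ p = 1"
    using co_props(2)[OF fin lc] eq by (simp add: power_mult[symmetric])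
  show "\<not> principal_char G (\<lambda>x. \<chi> x ^ (?o div p))"
  proof
    assume "principal_char G (\<lambda>x. \<chi> x ^ (?o div p))"
    hence "\<forall>x \<in> carrier G. \<chi> x ^ (?o div p) = 1" unfolding principal_char_def by simp
    hence "?o dvd ?o div p" by (rule co_dvd[OF fin lc])
    moreover have "?o div p > 0" using eq o0 by (metis gr0I mult_0)
    ultimately have "?o \<le> ?o div p" by (simp add: dvd_imp_le)
    moreover have "?o div p < ?o" using o0 p1 by simp
    ultimately show False by simp
  qed
qed

end

theorem mainTheorem8:
  fixes G :: "('a, 'b) monoid_scheme" and D :: "'a set"
    and v k la mu s \<alpha> :: nat
  assumes "group G" and "finite (carrier G)"
    and "is_regular_PDS G D v k la mu"
    and "0 < mu" and "mu < k"
    and "int s ^ 2 = PDS_Delta k la mu"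
    and "\<alpha> \<in> {1, 2}"
    and "\<exists>\<chi>. linear_char G \<chi> \<and> \<not> principal_char G \<chi> \<and>
              char_order G \<chi> dvd PDS_pi v k la mu s \<alpha>"
  shows "\<forall>\<psi>. linear_char G \<psi> \<and> coprime (char_order G \<psi>) s \<longrightarrow>
              char_order G \<psi> dvd PDS_pi v k la mu s \<alpha>"
proof -
  interpret group G by (rule assms(1))
  note fin = assms(2) and reg = assms(3) and sq = assms(6)
  have Dc: "D \<subseteq> carrier G" and vG: "card (carrier G) = v" and cardD: "card D = k"
    using reg unfolding is_regular_PDS_def is_PDS_def by auto
  have finD: "finite D" using Dc fin finite_subset by blast
  have ordv: "order G = v" using vG by (simp add: order_def)
  have v0: "v > 0" using order_gt_0_iff_finite fin ordv by simp
  define N where "N = order G"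
  define w where "w = cis (2*pi/order G)"
  have N0: "N > 0" using v0 ordv N_def by simp
  have ev: "\<And>\<chi> x. linear_char G \<chi> \<Longrightarrow> x \<in> carrier G \<Longrightarrow> \<chi> x \<in> evS N w"
    unfolding N_def w_def by (rule lc_evS[OF fin])
  let ?th = "\<lambda>i. PDS_theta la mu s i"
  let ?Pi = "PDS_Pi v k la mu s \<alpha>"
  have finPi: "finite ?Pi"
  proof (rule finite_subset[of _ "{..v}"])
    show "?Pi \<subseteq> {..v}" unfolding PDS_Pi_def using v0 by (auto intro: dvd_imp_le)
  qed simp
  have tha: "?th \<alpha> \<in> {?th 1, ?th 2}" using assms(7) by auto
  have kint: "(\<Sum>d\<in>D. (1::complex)) = of_int (int k)" using cardD by simp
  obtain \<chi> where \<chi>: "linear_char G \<chi>" "\<not> principal_char G \<chi>"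
      "char_order G \<chi> dvd PDS_pi v k la mu s \<alpha>"
    using assms(8) by blast
  have "char_order G \<chi> \<noteq> 1" using co_one[OF fin \<chi>(1)] \<chi>(2) by blast
  then obtain p where p: "prime p" "p dvd char_order G \<chi>" using prime_factor_nat by blast
  have "p dvd PDS_pi v k la mu s \<alpha>" using p(2) \<chi>(3) by (rule dvd_trans)
  hence "p dvd (\<Prod>q\<in>?Pi. q ^ multiplicity q v)" unfolding PDS_pi_def .
  hence "\<exists>q\<in>?Pi. p dvd q ^ multiplicity q v" by (simp only: prime_dvd_prod_iff[OF finPi p(1)])
  then obtain q0 where q0: "q0 \<in> ?Pi" "p dvd q0 ^ multiplicity q0 v" by blast
  have "p dvd q0" using q0(2) prime_dvd_power p(1) by blast
  moreover have "prime q0" using q0(1) unfolding PDS_Pi_def by simp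
  ultimately have "p = q0" using p(1) primes_dvd_imp_eq by blast
  hence pPi: "p \<in> ?Pi" using q0(1) by simp
  hence pns: "\<not> int p dvd int s" and pk: "int p dvd int k - ?th \<alpha>"
    unfolding PDS_Pi_def by auto
  define \<chi>' where "\<chi>' = (\<lambda>x. \<chi> x ^ (char_order G \<chi> div p))"
  have \<chi>'lc: "linear_char G \<chi>'" unfolding \<chi>'_def by (rule lc_power[OF \<chi>(1)])
  have \<chi>'np: "\<not> principal_char G \<chi>'" unfolding \<chi>'_def by (rule sub_char_np(1)[OF fin \<chi>(1) p])
  have \<chi>'p: "\<And>x. x \<in> carrier G \<Longrightarrow> \<chi>' x ^ p = 1" unfolding \<chi>'_def by (rule sub_char_np(2)[OF fin \<chi>(1) p])
  obtain a where a: "a \<in> {?th 1, ?th 2}" "(\<Sum>d\<in>D. \<chi>' d) = of_int a"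
    using lc_val[OF fin reg \<chi>'lc \<chi>'np sq] by blast
  have "int p dvd a - int k"
    by (rule frob_main[OF N0 p(1) finD, where f = \<chi>' and g = "\<lambda>_. 1"])
       (use ev[OF \<chi>'lc] Dc evS_one \<chi>'p a(2) kint in auto)
  hence "int p dvd a - ?th \<alpha>" using pk by (metis dvd_add diff_add_cancel add_diff_eq)
  hence aeq: "a = ?th \<alpha>" using theta_eq[OF sq pns a(1) tha] by blast
  show ?thesis
  proof (intro allI impI, elim conjE)
    fix \<psi> assume \<psi>: "linear_char G \<psi>" and cop: "coprime (char_order G \<psi>) s"
    let ?m = "char_order G \<psi>"
    have mv: "?m dvd v"
      using co_dvd[OF fin \<psi>] lc_root[OF fin \<psi>] ordv by simp
    have m0: "?m \<noteq> 0" using co_props(1)[OF fin \<psi>] by simp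
    have PF: "prime_factors ?m \<subseteq> ?Pi"
    proof
      fix q assume "q \<in> prime_factors ?m"
      hence q: "prime q" "q dvd ?m" by (auto simp: in_prime_factors_iff)
      have qv: "q dvd v" using q(2) mv by (rule dvd_trans)
      have qs: "\<not> q dvd s"
      proof
        assume "q dvd s"
        hence "is_unit q" using coprime_common_divisor[OF cop q(2)] by blast
        thus False using q(1) by simp
      qed
      hence qns: "\<not> int q dvd int s" by simp
      have "int q dvd int k - ?th \<alpha>"
      proof (rule ccontr)
        assume nq: "\<not> int q dvd int k - ?th \<alpha>"
        have pq: "p \<noteq> q" using nq pk by auto
        define \<psi>' where "\<psi>' = (\<lambda>x. \<psi> x ^ (?m div q))"
        have \<psi>'lc: "linear_char G \<psi>'" unfolding \<psi>'_def by (rule lc_power[OF \<psi>])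
        have \<psi>'np: "\<not> principal_char G \<psi>'" unfolding \<psi>'_def by (rule sub_char_np(1)[OF fin \<psi> q])
        have \<psi>'q: "\<And>x. x \<in> carrier G \<Longrightarrow> \<psi>' x ^ q = 1" unfolding \<psi>'_def by (rule sub_char_np(2)[OF fin \<psi> q])
        define \<phi> where "\<phi> = (\<lambda>x. \<chi>' x * \<psi>' x)"
        have \<phi>lc: "linear_char G \<phi>" unfolding \<phi>_def by (rule lc_prod[OF \<chi>'lc \<psi>'lc])
        have \<phi>np: "\<not> principal_char G \<phi>"
        proof
          assume "principal_char G \<phi>"
          hence "principal_char G \<psi>'"
            unfolding principal_char_def
          proof (intro ballI)
            fix x assume pr: "\<forall>x\<in>carrier G. \<phi> x = 1" and x: "x \<in> carrier G"
            have "\<psi>' x ^ p = (\<chi>' x * \<psi>' x) ^ p" using \<chi>'p[OF x] by (simp add: power_mult_distrib)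
            also have "\<dots> = 1" using pr x unfolding \<phi>_def by simp
            finally have "\<psi>' x ^ p = 1" .
            thus "\<psi>' x = 1"
              using root_coprime[OF _ \<psi>'q[OF x] primes_coprime[OF p(1) q(1) pq]] p(1) by auto
          qed
          thus False using \<psi>'np by blast
        qed
        obtain b where b: "b \<in> {?th 1, ?th 2}" "(\<Sum>d\<in>D. \<psi>' d) = of_int b"
          using lc_val[OF fin reg \<psi>'lc \<psi>'np sq] by blast
        obtain c where c: "c \<in> {?th 1, ?th 2}" "(\<Sum>d\<in>D. \<phi> d) = of_int c"
          using lc_val[OF fin reg \<phi>lc \<phi>np sq] by blast
        have qb: "int q dvd b - int k"
          by (rule frob_main[OF N0 q(1) finD, where f = \<psi>' and g = "\<lambda>_. 1"])
             (use ev[OF \<psi>'lc] Dc evS_one \<psi>'q b(2) kint in auto)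
        have "int p dvd c - b"
          by (rule frob_main[OF N0 p(1) finD, where f = \<phi> and g = \<psi>'])
             (use ev[OF \<phi>lc] ev[OF \<psi>'lc] Dc \<chi>'p c(2) b(2) in \<open>auto simp: \<phi>_def power_mult_distrib\<close>)
        hence cb: "c = b" using theta_eq[OF sq pns c(1) b(1)] by blast
        have "int q dvd c - a"
          by (rule frob_main[OF N0 q(1) finD, where f = \<phi> and g = \<chi>'])
             (use ev[OF \<phi>lc] ev[OF \<chi>'lc] Dc \<psi>'q c(2) a(2) in \<open>auto simp: \<phi>_def power_mult_distrib\<close>)
        hence ca: "c = a" using theta_eq[OF sq qns c(1) a(1)] by blast
        have "int q dvd ?th \<alpha> - int k" using qb cb ca aeq by simp
        hence "int q dvd int k - ?th \<alpha>" by (metis dvd_minus_iff minus_diff_eq)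
        thus False using nq by blast
      qed
      thus "q \<in> ?Pi" unfolding PDS_Pi_def using q(1) qv qs by simp
    qed
    have "?m = (\<Prod>q \<in> prime_factors ?m. q ^ multiplicity q ?m)"
      using prod_prime_factors[OF m0] by simp
    also have "\<dots> dvd (\<Prod>q \<in> prime_factors ?m. q ^ multiplicity q v)"
      by (rule prod_dvd_prod, rule le_imp_power_dvd, rule dvd_imp_multiplicity_le[OF mv]) (use v0 in simp)
    also have "\<dots> dvd (\<Prod>q \<in> ?Pi. q ^ multiplicity q v)"
      by (rule prod_dvd_prod_subset[OF finPi PF])
    finally show "?m dvd PDS_pi v k la mu s \<alpha>" unfolding PDS_pi_def .
  qed
qed

end
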